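(* Let $x^{(0)}\in\mathbb R^n$, $h_0:=H(x^{(0)})$, $v_i^{(0)}:=a_1x_1^{(0)}+\dots+a_ix_i^{(0)}$ ($v_0^{(0)}:=0$), and let $x^{(m)}:=\mathcal K^m(x^{(0)})$ be the iterates of the map $\tilde x_i=x_i\dfrac{(1-\epsilon H)(1+\epsilon H)}{(1-\epsilon H+2\epsilon v_{i-1})(1-\epsilon H+2\epsilon v_i)}$. If $h_0\neq0$, then, writing $\rho:=\dfrac{1+\epsilon h_0}{1-\epsilon h_0}$, $$x_i^{(m)}=x_i^{(0)}\frac{\rho^m h_0^2}{\big(h_0+v^{(0)}_{i-1}(\rho^m-1)\big)\big(h_0+v^{(0)}_i(\rho^m-1)\big)},\qquad i=1,\dots,n,$$ and if $h_0=0$, $$x_i^{(m)}=x_i^{(0)}\frac{1}{\big(1+2m\epsilon v^{(0)}_{i-1}\big)\big(1+2m\epsilon v^{(0)}_i\big)},\qquad i=1,\dots,n.$$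
   Context: $(a_1,\dots,a_n)\in\mathbb R^n\setminus\{0\}$, $\epsilon>0$ small, $H=a_1x_1+\dots+a_nx_n$, $v_0:=0$, $v_i:=a_1x_1+\dots+a_ix_i$. (Formulas hold whenever the iterates are defined.) *)

theory Defs
  imports Complex_Main
begin

text \<open>Vectors of R^n are represented as functions nat => real, with the
  components x 1, ..., x n (other arguments are irrelevant).\<close>

definition Hf :: "nat \<Rightarrow> (nat \<Rightarrow> real) \<Rightarrow> (nat \<Rightarrow> real) \<Rightarrow> real" where
  "Hf n a x = (\<Sum>j=1..n. a j * x j)"

definition vp :: "(nat \<Rightarrow> real) \<Rightarrow> (nat \<Rightarrow> real) \<Rightarrow> nat \<Rightarrow> real" where
  "vp a x i = (\<Sum>j=1..i. a j * x j)"

definition Kmap :: "nat \<Rightarrow> (nat \<Rightarrow> real) \<Rightarrow> real \<Rightarrow> (nat \<Rightarrow> real) \<Rightarrow> (nat \<Rightarrow> real)" where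
  "Kmap n a \<epsilon> x = (\<lambda>i. if 1 \<le> i \<and> i \<le> n then
      x i * ((1 - \<epsilon> * Hf n a x) * (1 + \<epsilon> * Hf n a x)) /
        ((1 - \<epsilon> * Hf n a x + 2 * \<epsilon> * vp a x (i - 1)) *
         (1 - \<epsilon> * Hf n a x + 2 * \<epsilon> * vp a x i))
    else x i)"

definition iterates_defined :: "nat \<Rightarrow> (nat \<Rightarrow> real) \<Rightarrow> real \<Rightarrow> (nat \<Rightarrow> real) \<Rightarrow> nat \<Rightarrow> bool" where
  "iterates_defined n a \<epsilon> x m \<longleftrightarrow>
     (\<forall>k<m. \<forall>i\<in>{1..n}.
        let y = (Kmap n a \<epsilon> ^^ k) x in
        1 - \<epsilon> * Hf n a y + 2 * \<epsilon> * vp a y (i - 1) \<noteq> 0 \<and>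
        1 - \<epsilon> * Hf n a y + 2 * \<epsilon> * vp a y i \<noteq> 0)"

end

theory Submission
  imports Defs
begin

lemma vp_0[simp]: "vp a x 0 = 0" by (simp add: vp_def)
lemma vp_Suc: "vp a x (Suc j) = vp a x j + a (Suc j) * x (Suc j)"
  by (simp add: vp_def)
lemma Hf_vp: "Hf n a x = vp a x n" by (simp add: Hf_def vp_def)

lemma vp_cong: "(\<And>l. 1 \<le> l \<Longrightarrow> l \<le> j \<Longrightarrow> x l = y l) \<Longrightarrow> vp a x j = vp a y j"
  unfolding vp_def by (rule sum.cong) auto

lemma hs_lemma:
  fixes h \<epsilon> :: real
  assumes "1 - \<epsilon> * h \<noteq> 0"
  shows "h * (\<Sum>l<k. 2 * \<epsilon> * ((1 + \<epsilon> * h) / (1 - \<epsilon> * h)) ^ l / (1 - \<epsilon> * h))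
         = ((1 + \<epsilon> * h) / (1 - \<epsilon> * h)) ^ k - 1"
proof (induction k)
  case 0 then show ?case by simp
next
  case (Suc k)
  let ?r = "(1 + \<epsilon> * h) / (1 - \<epsilon> * h)"
  have e: "h * (2 * \<epsilon> * ?r ^ k / (1 - \<epsilon> * h)) = ?r ^ k * (?r - 1)"
    using assms by (simp add: field_simps)
  show ?case using Suc e by (simp add: algebra_simps)
qed

lemma uE_alg:
  fixes V S e h r :: real
  assumes "1 + V * S \<noteq> 0" "1 - e * h \<noteq> 0"
  shows "1 - e * h + 2 * e * (r * V / (1 + V * S)) =
    (1 - e * h) * (1 + V * (S + 2 * e * r / (1 - e * h))) / (1 + V * S)"
proof -
  have g: "\<And>X::real. (1 - e * h) * (1 + V * (S + X)) = (1 - e * h) * (1 + V * S) + V * ((1 - e * h) * X)"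
    by (simp add: algebra_simps)
  have "(1 - e * h) * (2 * e * r / (1 - e * h)) = 2 * e * r" using assms(2) by simp
  then have "(1 - e * h) * (1 + V * (S + 2 * e * r / (1 - e * h))) = (1 - e * h) * (1 + V * S) + 2 * e * r * V"
    unfolding g by simp
  then show ?thesis using assms(1) by (simp add: add_divide_distrib)
qed

lemma y_alg0:
  fixes x q p d A B A' B' :: real
  assumes "A \<noteq> 0" "B \<noteq> 0" "A' \<noteq> 0" "B' \<noteq> 0" "d \<noteq> 0"
  shows "x * q / (A * B) * (d * p) / ((d * A' / A) * (d * B' / B)) = x * (q * (p / d)) / (A' * B')"
  using assms by (simp add: field_simps)

lemma y_alg:
  fixes x r e h A B A' B' :: real
  assumes "A \<noteq> 0" "B \<noteq> 0" "A' \<noteq> 0" "B' \<noteq> 0" "1 - e * h \<noteq> 0"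
  shows "x * ((1 + e * h) / (1 - e * h)) ^ k / (A * B) * ((1 - e * h) * (1 + e * h)) /
     (((1 - e * h) * A' / A) * ((1 - e * h) * B' / B)) =
     x * ((1 + e * h) / (1 - e * h)) ^ Suc k / (A' * B')"
  unfolding power_Suc2 by (rule y_alg0[OF assms])

lemma tele_alg:
  fixes R V c S :: real
  assumes "1 + V * S \<noteq> 0" "1 + (V + c) * S \<noteq> 0"
  shows "R * V / (1 + V * S) + c * R / ((1 + V * S) * (1 + (V + c) * S)) = R * (V + c) / (1 + (V + c) * S)"
proof -
  define P where "P = 1 + V * S"
  define Q where "Q = 1 + (V + c) * S"
  have "R * V / P + c * R / (P * Q) = (R * V * Q + c * R) / (P * Q)"
    using assms unfolding P_def[symmetric] Q_def[symmetric] by (simp add: field_simps)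
  also have "R * V * Q + c * R = R * (V + c) * P" unfolding P_def Q_def by (simp add: algebra_simps)
  also have "R * (V + c) * P / (P * Q) = R * (V + c) / Q"
    using assms unfolding P_def[symmetric] Q_def[symmetric] by simp
  finally show ?thesis unfolding P_def Q_def .
qed

lemma main_lemma:
  fixes n :: nat and a x0 :: "nat \<Rightarrow> real" and \<epsilon> :: real and m :: nat
  assumes defined: "iterates_defined n a \<epsilon> x0 m" and n1: "1 \<le> n"
  defines "h \<equiv> Hf n a x0"
  defines "\<rho> \<equiv> (1 + \<epsilon> * h) / (1 - \<epsilon> * h)"
  defines "s \<equiv> (\<lambda>k. (\<Sum>l<k. 2 * \<epsilon> * \<rho> ^ l / (1 - \<epsilon> * h)))"
  defines "E \<equiv> (\<lambda>j k. 1 + vp a x0 j * s k)"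
  shows "k \<le> m \<Longrightarrow> Hf n a ((Kmap n a \<epsilon> ^^ k) x0) = h \<and>
     (\<forall>j\<le>n. E j k \<noteq> 0 \<and> vp a ((Kmap n a \<epsilon> ^^ k) x0) j = \<rho> ^ k * vp a x0 j / E j k) \<and>
     (\<forall>i\<in>{1..n}. ((Kmap n a \<epsilon> ^^ k) x0) i = x0 i * \<rho> ^ k / (E (i - 1) k * E i k))"
proof (induction k)
  case 0
  show ?case by (simp add: h_def E_def s_def)
next
  case (Suc k)
  define y where "y = (Kmap n a \<epsilon> ^^ k) x0"
  define y' where "y' = Kmap n a \<epsilon> y"
  have y'eq: "(Kmap n a \<epsilon> ^^ Suc k) x0 = y'" by (simp add: y_def y'_def)
  from Suc have IH: "Hf n a y = h" "\<And>j. j \<le> n \<Longrightarrow> E j k \<noteq> 0"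
    "\<And>j. j \<le> n \<Longrightarrow> vp a y j = \<rho> ^ k * vp a x0 j / E j k"
    "\<And>i. 1 \<le> i \<Longrightarrow> i \<le> n \<Longrightarrow> y i = x0 i * \<rho> ^ k / (E (i - 1) k * E i k)"
    by (auto simp: y_def)
  define u where "u = (\<lambda>j. 1 - \<epsilon> * h + 2 * \<epsilon> * vp a y j)"
  have def1: "\<And>i. 1 \<le> i \<Longrightarrow> i \<le> n \<Longrightarrow> u (i - 1) \<noteq> 0 \<and> u i \<noteq> 0"
    using defined Suc.prems IH(1) unfolding iterates_defined_def u_def y_def Let_def
    by (metis Suc_le_lessD atLeastAtMost_iff)
  have ub: "u j \<noteq> 0" if "j \<le> n" for j
  proof (cases "j = 0")
    case True then show ?thesis using def1[of 1] n1 by simp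
  next
    case False then show ?thesis using def1[of j] that by simp
  qed
  have eh: "1 - \<epsilon> * h \<noteq> 0" using ub[of 0] by (simp add: u_def)
  have sS: "s (Suc k) = s k + 2 * \<epsilon> * \<rho> ^ k / (1 - \<epsilon> * h)" by (simp add: s_def)
  have uE: "u j = (1 - \<epsilon> * h) * E j (Suc k) / E j k" if "j \<le> n" for j
  proof -
    have "E j k \<noteq> 0" using IH(2) that by simp
    then show ?thesis using eh unfolding u_def IH(3)[OF that] E_def sS
      by (rule uE_alg)
  qed
  have Enz: "E j (Suc k) \<noteq> 0" if "j \<le> n" for j
    using uE[OF that] ub[OF that] by auto
  have y'i: "y' i = x0 i * \<rho> ^ Suc k / (E (i - 1) (Suc k) * E i (Suc k))"
    if "1 \<le> i" "i \<le> n" for i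
  proof -
    have y'd: "y' i = y i * ((1 - \<epsilon> * h) * (1 + \<epsilon> * h)) / (u (i - 1) * u i)"
      using that by (simp add: y'_def Kmap_def IH(1) u_def)
    have n1: "E (i - 1) k \<noteq> 0" "E i k \<noteq> 0" "E (i - 1) (Suc k) \<noteq> 0" "E i (Suc k) \<noteq> 0"
      using IH(2) Enz that by auto
    show ?thesis unfolding y'd IH(4)[OF that] uE[of i, OF that(2)]
      uE[of "i - 1", OF le_trans[OF diff_le_self that(2)]] using n1 eh that unfolding \<rho>_def
      by (intro y_alg) auto
  qed
  have vpS: "vp a y' j = \<rho> ^ Suc k * vp a x0 j / E j (Suc k)" if "j \<le> n" for j
    using that
  proof (induction j)
    case 0 then show ?case by simp
  next
    case (Suc j)
    have e1: "E j (Suc k) \<noteq> 0" "E (Suc j) (Suc k) \<noteq> 0" using Enz Suc.prems by auto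
    have "vp a y' (Suc j) = \<rho> ^ Suc k * vp a x0 j / E j (Suc k)
       + a (Suc j) * (x0 (Suc j) * \<rho> ^ Suc k / (E j (Suc k) * E (Suc j) (Suc k)))"
      using Suc y'i[of "Suc j"] by (simp add: vp_Suc)
    also have "\<dots> = \<rho> ^ Suc k * vp a x0 (Suc j) / E (Suc j) (Suc k)"
      using tele_alg[of "vp a x0 j" "s (Suc k)" "a (Suc j) * x0 (Suc j)" "\<rho> ^ Suc k"] e1
      unfolding E_def vp_Suc by (simp add: mult.commute mult.left_commute)
    finally show ?case .
  qed
  have rnz: "\<rho> \<noteq> 0" using ub[of n] eh
    by (simp add: u_def \<rho>_def IH(1)[symmetric] Hf_vp)
  have EN: "E n (Suc k) = \<rho> ^ Suc k"
    using hs_lemma[OF eh, of "Suc k"] unfolding E_def s_def \<rho>_def h_def Hf_vp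
    by (simp add: algebra_simps)
  have H': "Hf n a y' = h"
    using vpS[of n] EN rnz by (simp add: Hf_vp h_def)
  show ?case unfolding y'eq using H' Enz vpS y'i by auto
qed

theorem proposition3p4:
  fixes n :: nat and a x0 :: "nat \<Rightarrow> real" and \<epsilon> :: real and m i :: nat
  assumes a_nz: "\<exists>j\<in>{1..n}. a j \<noteq> 0"
    and eps_pos: "\<epsilon> > 0"
    and defined: "iterates_defined n a \<epsilon> x0 m"
    and i_range: "1 \<le> i" "i \<le> n"
  shows "(Hf n a x0 \<noteq> 0 \<longrightarrow>
           (let h0 = Hf n a x0; \<rho> = (1 + \<epsilon> * h0) / (1 - \<epsilon> * h0) in
            ((Kmap n a \<epsilon> ^^ m) x0) i =
              x0 i * (\<rho> ^ m * h0 ^ 2) /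
                ((h0 + vp a x0 (i - 1) * (\<rho> ^ m - 1)) * (h0 + vp a x0 i * (\<rho> ^ m - 1)))))
       \<and> (Hf n a x0 = 0 \<longrightarrow>
           ((Kmap n a \<epsilon> ^^ m) x0) i =
              x0 i * (1 / ((1 + 2 * real m * \<epsilon> * vp a x0 (i - 1)) *
                           (1 + 2 * real m * \<epsilon> * vp a x0 i))))"
proof -
  have n1: "1 \<le> n" using i_range by simp
  define h where "h = Hf n a x0"
  define \<rho> where "\<rho> = (1 + \<epsilon> * h) / (1 - \<epsilon> * h)"
  define s where "s = (\<lambda>k. (\<Sum>l<k. 2 * \<epsilon> * \<rho> ^ l / (1 - \<epsilon> * h)))"
  define E where "E = (\<lambda>j k. 1 + vp a x0 j * s k)"
  have KMf: "((Kmap n a \<epsilon> ^^ m) x0) i = x0 i * \<rho> ^ m / (E (i - 1) m * E i m)"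
  proof -
    have "\<forall>i\<in>{1..n}. ((Kmap n a \<epsilon> ^^ m) x0) i = x0 i * \<rho> ^ m / (E (i - 1) m * E i m)"
      using main_lemma[OF defined n1, of m] unfolding h_def \<rho>_def s_def E_def by blast
    then show ?thesis using i_range by auto
  qed
  have hs: "h * s m = \<rho> ^ m - 1"
  proof (cases m)
    case 0 then show ?thesis by (simp add: s_def)
  next
    case (Suc k)
    have "1 - \<epsilon> * h \<noteq> 0"
      using defined n1 unfolding iterates_defined_def Suc Let_def
      by (metis (no_types, lifting) One_nat_def atLeastAtMost_iff diff_self_eq_0 funpow_0
          le_refl mult_zero_right add.right_neutral vp_0 zero_less_Suc h_def)
    then show ?thesis using hs_lemma unfolding s_def \<rho>_def by blast
  qed
  show ?thesis
  proof (intro conjI impI)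
    assume hnz: "Hf n a x0 \<noteq> 0"
    have "x0 i * \<rho> ^ m / (E (i - 1) m * E i m) =
      x0 i * (\<rho> ^ m * h ^ 2) /
                ((h + vp a x0 (i - 1) * (\<rho> ^ m - 1)) * (h + vp a x0 i * (\<rho> ^ m - 1)))"
    proof -
      have "h + vp a x0 j * (\<rho> ^ m - 1) = h * E j m" for j
        unfolding E_def hs[symmetric] by (simp add: algebra_simps)
      then show ?thesis using hnz h_def by (simp add: power2_eq_square)
    qed
    then show "let h0 = Hf n a x0; \<rho> = (1 + \<epsilon> * h0) / (1 - \<epsilon> * h0) in
            ((Kmap n a \<epsilon> ^^ m) x0) i =
              x0 i * (\<rho> ^ m * h0 ^ 2) /
                ((h0 + vp a x0 (i - 1) * (\<rho> ^ m - 1)) * (h0 + vp a x0 i * (\<rho> ^ m - 1)))"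
      using KMf unfolding Let_def h_def[symmetric] \<rho>_def[symmetric] by simp
  next
    assume hz: "Hf n a x0 = 0"
    have r1: "\<rho> = 1" using hz by (simp add: \<rho>_def h_def)
    have sm: "s m = 2 * real m * \<epsilon>" using hz by (simp add: s_def r1 h_def)
    show "((Kmap n a \<epsilon> ^^ m) x0) i =
              x0 i * (1 / ((1 + 2 * real m * \<epsilon> * vp a x0 (i - 1)) *
                           (1 + 2 * real m * \<epsilon> * vp a x0 i)))"
      using KMf by (simp add: r1 E_def sm algebra_simps)
  qed
qed

end
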